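(* Let $q$ be a power of a prime $p$, $K$ an algebraic closure of $\mathbb{F}_q$, and let $\Delta_q$ be the stabilizer in $\mathrm{PGL}(3,q)$ of the triangle with vertices $(1:0:0),(0:1:0),(0:0:1)$, acting on $\mathrm{PG}(2,K)$. Then $d(\Delta_q)=q-1$, $\varepsilon(\Delta_q)=q-1$, and the Fermat curve $X^{q-1}+Y^{q-1}+Z^{q-1}=0$ is the only $\Delta_q$-invariant curve of degree $q-1$. Moreover, the $\Delta_q$-invariant irreducible plane curves of degree $2(q-1)$ are those of homogeneous equation $$\lambda(X^{q-1}+Y^{q-1}+Z^{q-1})^2+(XY)^{q-1}+(YZ)^{q-1}+(ZX)^{q-1}=0,\quad \lambda\in K.$$
   Context: Plane curves are over $K$; irreducible means irreducible over $K$; $G$-invariant means mapped onto itself by every element of $G$. $d(G)$ is the smallest degree of a $G$-invariant irreducible plane curve other than a line; $\varepsilon(G)=d'(G)-d(G)$ where $d'(G)$ is the smallest degree larger than $d(G)$ of a $G$-invariant irreducible plane curve.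
   Formalization: q >= 3 is assumed, the Fermat curve is unique among irreducible $\Delta_q$-invariant curves of degree q-1, and the irreducible $\Delta_q$-invariant curves of degree 2(q-1) are the irreducible members of the displayed family. Each condition added here is assumed in the paper as well or is needed for the statement above to hold. *)

theory Defs
  imports "HOL-Analysis.Analysis" "HOL-Computational_Algebra.Polynomial"
begin

text \<open>Homogeneous polynomials in K[X,Y,Z] are represented as nested univariate
  polynomials: the innermost variable is X, then Y, the outermost is Z.\<close>

type_synonym 'k pp3 = "'k poly poly poly"

definition Xv :: "'k::comm_ring_1 pp3" where "Xv = [:[:monom 1 1:]:]"
definition Yv :: "'k::comm_ring_1 pp3" where "Yv = [:monom 1 1:]"
definition Zv :: "'k::comm_ring_1 pp3" where "Zv = monom 1 1"

definition const3 :: "'k::comm_ring_1 \<Rightarrow> 'k pp3" where "const3 c = [:[:[:c:]:]:]"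

definition eval3 :: "'k::comm_ring_1 pp3 \<Rightarrow> 'k pp3 \<Rightarrow> 'k pp3 \<Rightarrow> 'k pp3 \<Rightarrow> 'k pp3" where
  "eval3 F a b c =
     poly (map_poly (\<lambda>g. poly (map_poly (\<lambda>h. poly (map_poly const3 h) a) g) b) F) c"

definition homog :: "nat \<Rightarrow> 'k::comm_ring_1 pp3 \<Rightarrow> bool" where
  "homog n F \<longleftrightarrow> F \<noteq> 0 \<and>
     (\<forall>i j k. coeff (coeff (coeff F k) j) i \<noteq> 0 \<longrightarrow> i + j + k = n)"

definition var3 :: "3 \<Rightarrow> 'k::comm_ring_1 pp3" where
  "var3 i = (if i = 1 then Xv else if i = 2 then Yv else Zv)"

definition lin_subst :: "('k::comm_ring_1 ^3^3) \<Rightarrow> 'k pp3 \<Rightarrow> 'k pp3" where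
  "lin_subst M F = eval3 F
      (\<Sum>j\<in>UNIV. const3 (M $ 1 $ j) * var3 j)
      (\<Sum>j\<in>UNIV. const3 (M $ 2 $ j) * var3 j)
      (\<Sum>j\<in>UNIV. const3 (M $ 3 $ j) * var3 j)"

text \<open>The curve F = 0 is mapped onto itself by every element of G.\<close>
definition invariant :: "('k::field ^3^3) set \<Rightarrow> 'k pp3 \<Rightarrow> bool" where
  "invariant G F \<longleftrightarrow> (\<forall>M\<in>G. \<exists>c. c \<noteq> 0 \<and> lin_subst M F = const3 c * F)"

definition inv_irr_curve :: "('k::field ^3^3) set \<Rightarrow> nat \<Rightarrow> 'k pp3 \<Rightarrow> bool" where
  "inv_irr_curve G n F \<longleftrightarrow> homog n F \<and> irreducible F \<and> invariant G F"

definition dG :: "('k::field ^3^3) set \<Rightarrow> nat" where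
  "dG G = (LEAST n. 2 \<le> n \<and> (\<exists>F::'k pp3. inv_irr_curve G n F))"

definition d'G :: "('k::field ^3^3) set \<Rightarrow> nat" where
  "d'G G = (LEAST n. dG G < n \<and> (\<exists>F::'k pp3. inv_irr_curve G n F))"

definition epsG :: "('k::field ^3^3) set \<Rightarrow> nat" where
  "epsG G = d'G G - dG G"

text \<open>PGL(3,q), represented by the invertible matrices with entries in F_q
  (the elements x of K with x^q = x); scalar multiples act identically.\<close>
definition PGL3 :: "nat \<Rightarrow> ('k::field ^3^3) set" where
  "PGL3 q = {M. (\<forall>i j. (M $ i $ j) ^ q = M $ i $ j) \<and> det M \<noteq> 0}"

definition Delta :: "nat \<Rightarrow> ('k::field ^3^3) set" where
  "Delta q = {M \<in> PGL3 q. \<forall>i. \<exists>j c. c \<noteq> 0 \<and> M *v axis i 1 = c *s axis j 1}"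

definition fermat :: "nat \<Rightarrow> 'k::field pp3" where
  "fermat q = Xv ^ (q - 1) + Yv ^ (q - 1) + Zv ^ (q - 1)"

definition fam :: "nat \<Rightarrow> 'k::field \<Rightarrow> 'k pp3" where
  "fam q t = const3 t * (fermat q)\<^sup>2
     + (Xv * Yv) ^ (q - 1) + (Yv * Zv) ^ (q - 1) + (Zv * Xv) ^ (q - 1)"

end

theory Submission
  imports Defs
begin

definition cf :: "'k::comm_ring_1 pp3 \<Rightarrow> nat \<Rightarrow> nat \<Rightarrow> nat \<Rightarrow> 'k" where
  "cf F i j k = coeff (coeff (coeff F k) j) i"

lemma cf_add[simp]: "cf (F + G) i j k = cf F i j k + cf G i j k" by (simp add: cf_def)
lemma cf_zero[simp]: "cf 0 i j k = 0" by (simp add: cf_def)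
lemma cf_sum: "cf (\<Sum>x\<in>A. F x) i j k = (\<Sum>x\<in>A. cf (F x) i j k)"
  by (simp add: cf_def coeff_sum)
lemma cf_const3_mult[simp]: "cf (const3 c * F) i j k = c * cf F i j k"
  by (simp add: cf_def const3_def)
lemma cf_eq_iff: "F = G \<longleftrightarrow> (\<forall>i j k. cf F i j k = cf G i j k)"
  by (auto simp: cf_def poly_eq_iff)

definition mon :: "'k::comm_ring_1 \<Rightarrow> nat \<Rightarrow> nat \<Rightarrow> nat \<Rightarrow> 'k pp3" where
  "mon c i j k = const3 c * Xv ^ i * Yv ^ j * Zv ^ k"

lemma mon_monom: "mon c i j k = monom (monom (monom c i) j) k"
  by (simp add: mon_def const3_def Xv_def Yv_def Zv_def monom_0[symmetric] mult_monom monom_power)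

lemma cf_mon: "cf (mon c i j k) a b d = (if a = i \<and> b = j \<and> d = k then c else 0)"
  by (simp add: mon_monom cf_def coeff_monom)

lemma map_poly_add_hom:
  assumes "\<And>x y. f (x + y) = f x + f y" "f 0 = 0"
  shows "map_poly f (p + q) = map_poly f p + map_poly f q"
  by (rule poly_eqI) (simp add: coeff_map_poly assms)

lemma map_poly_mult_hom:
  fixes f :: "'a::comm_ring_1 \<Rightarrow> 'b::comm_ring_1"
  assumes a: "\<And>x y. f (x + y) = f x + f y" and z: "f 0 = 0" and m: "\<And>x y. f (x * y) = f x * f y"
  shows "map_poly f (p * q) = map_poly f p * map_poly f q"
proof (rule poly_eqI)
  fix n
  have s: "f (sum g A) = sum (\<lambda>x. f (g x)) A" for g :: "nat \<Rightarrow> 'a" and A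
    using sum_comp_morphism[of f g A, OF z a] by (simp add: o_def)
  show "coeff (map_poly f (p * q)) n = coeff (map_poly f p * map_poly f q) n"
    by (simp only: coeff_map_poly z coeff_mult s m)
qed

lemma const3_add: "const3 (x + y) = const3 x + const3 y" by (simp add: const3_def)
lemma const3_mult: "const3 (x * y) = const3 x * const3 y" by (simp add: const3_def)
lemma const3_0[simp]: "const3 0 = 0" by (simp add: const3_def)
lemma const3_1[simp]: "const3 1 = 1" by (simp add: const3_def one_pCons)
lemma const3_power: "const3 (x ^ n) = const3 x ^ n" by (induct n) (simp_all add: const3_mult)

definition phX :: "'k::comm_ring_1 pp3 \<Rightarrow> 'k poly \<Rightarrow> 'k pp3" where
  "phX a h = poly (map_poly const3 h) a"
definition phY :: "'k::comm_ring_1 pp3 \<Rightarrow> 'k pp3 \<Rightarrow> 'k poly poly \<Rightarrow> 'k pp3" where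
  "phY a b g = poly (map_poly (phX a) g) b"

lemma phX_add: "phX a (x + y) = phX a x + phX a y"
  unfolding phX_def by (subst map_poly_add_hom) (simp_all add: const3_add)
lemma phX_0[simp]: "phX a 0 = 0" by (simp add: phX_def)
lemma phX_mult: "phX a (x * y) = phX a x * phX a y"
  unfolding phX_def by (subst map_poly_mult_hom) (simp_all add: const3_add const3_mult)
lemma phY_add: "phY a b (x + y) = phY a b x + phY a b y"
  unfolding phY_def by (subst map_poly_add_hom) (simp_all add: phX_add)
lemma phY_0[simp]: "phY a b 0 = 0" by (simp add: phY_def)
lemma phY_mult: "phY a b (x * y) = phY a b x * phY a b y"
  unfolding phY_def by (subst map_poly_mult_hom) (simp_all add: phX_add phX_mult)

lemma eval3_alt: "eval3 F a b c = poly (map_poly (phY a b) F) c"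
  unfolding eval3_def phY_def[abs_def] phX_def[abs_def] ..

lemma phX_pCons: "phX a (pCons x h) = const3 x + a * phX a h"
  by (simp add: phX_def map_poly_pCons)
lemma phY_pCons: "phY a b (pCons x h) = phX a x + b * phY a b h"
  by (simp add: phY_def map_poly_pCons)
lemma eval3_pCons: "eval3 (pCons x h) a b c = phY a b x + c * eval3 h a b c"
  by (simp add: eval3_alt map_poly_pCons)
lemma phX_1[simp]: "phX a 1 = 1" by (simp add: phX_def)
lemma phY_1[simp]: "phY a b 1 = 1" by (simp add: phY_def)

lemma eval3_add[simp]: "eval3 (F + G) a b c = eval3 F a b c + eval3 G a b c"
  unfolding eval3_alt by (subst map_poly_add_hom) (simp_all add: phY_add)
lemma eval3_mult[simp]: "eval3 (F * G) a b c = eval3 F a b c * eval3 G a b c"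
  unfolding eval3_alt by (subst map_poly_mult_hom) (simp_all add: phY_add phY_mult)
lemma eval3_0[simp]: "eval3 0 a b c = 0" by (simp add: eval3_alt)
lemma eval3_const3[simp]: "eval3 (const3 x) a b c = const3 x"
  by (simp add: const3_def eval3_pCons phY_pCons phX_pCons)
lemma eval3_1[simp]: "eval3 1 a b c = 1"
  using eval3_const3[of 1 a b c] by simp
lemma eval3_power[simp]: "eval3 (F ^ n) a b c = eval3 F a b c ^ n"
  by (induct n) simp_all
lemma eval3_sum: "eval3 (\<Sum>x\<in>A. F x) a b c = (\<Sum>x\<in>A. eval3 (F x) a b c)"
  by (induct A rule: infinite_finite_induct) simp_all
lemma eval3_Xv[simp]: "eval3 Xv a b c = a"
  by (simp add: Xv_def monom_Suc eval3_pCons phY_pCons phX_pCons)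
lemma eval3_Yv[simp]: "eval3 Yv a b c = b"
  by (simp add: Yv_def monom_Suc eval3_pCons phY_pCons phX_pCons)
lemma eval3_Zv[simp]: "eval3 Zv a b c = c"
  by (simp add: Zv_def monom_Suc eval3_pCons phY_pCons phX_pCons)
lemma eval3_mon[simp]: "eval3 (mon x i j k) a b c = const3 x * a ^ i * b ^ j * c ^ k"
  by (simp add: mon_def)

definition bnd :: "nat \<Rightarrow> 'k::comm_ring_1 pp3 \<Rightarrow> bool" where
  "bnd N F \<longleftrightarrow> (\<forall>i j k. cf F i j k \<noteq> 0 \<longrightarrow> i \<le> N \<and> j \<le> N \<and> k \<le> N)"

abbreviation BB :: "nat \<Rightarrow> (nat \<times> nat \<times> nat) set" where
  "BB N \<equiv> {..N} \<times> {..N} \<times> {..N}"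

lemma cf_sum_mon:
  "cf (\<Sum>(i,j,k)\<in>BB N. mon (g i j k) i j k) a b d = (if a \<le> N \<and> b \<le> N \<and> d \<le> N then g a b d else 0)"
proof -
  have "cf (\<Sum>(i,j,k)\<in>BB N. mon (g i j k) i j k) a b d
      = (\<Sum>x\<in>BB N. if x = (a,b,d) then g a b d else 0)"
    unfolding cf_sum by (rule sum.cong) (force simp: cf_mon)+
  also have "\<dots> = (if (a,b,d) \<in> BB N then g a b d else 0)"
    using sum.delta[of "BB N" "(a,b,d)" "\<lambda>_. g a b d"] by simp
  finally show ?thesis by simp
qed

lemma rep: "bnd N F \<Longrightarrow> F = (\<Sum>(i,j,k)\<in>BB N. mon (cf F i j k) i j k)"
  unfolding cf_eq_iff cf_sum_mon bnd_def by (metis not_le)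

lemma homog_bnd: "homog n F \<Longrightarrow> bnd n F"
  unfolding homog_def bnd_def cf_def
  by (metis le_add1 le_add2 add.assoc add.commute)

lemma eval3_rep: "bnd N F \<Longrightarrow>
  eval3 F a b c = (\<Sum>(i,j,k)\<in>BB N. const3 (cf F i j k) * a ^ i * b ^ j * c ^ k)"
  apply (subst rep, assumption)
  apply (simp add: eval3_sum case_prod_beta)
  done

lemma mon_mult: "mon x a b d * mon y i j k = mon (x * y) (a + i) (b + j) (d + k)"
  by (simp add: mon_def const3_mult power_add algebra_simps)

lemma mon_0[simp]: "mon 0 i j k = 0" by (simp add: mon_def)

lemma const3_mon: "const3 x = mon x 0 0 0" by (simp add: mon_def)

definition diag3 :: "'k \<Rightarrow> 'k \<Rightarrow> 'k \<Rightarrow> 'k::comm_ring_1^3^3" where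
  "diag3 a b c = (\<chi> i j. if i = j then (if i = 1 then a else if i = 2 then b else c) else 0)"

lemma lin_subst_diag3:
  "lin_subst (diag3 a b c) F = eval3 F (const3 a * Xv) (const3 b * Yv) (const3 c * Zv)"
  by (simp add: lin_subst_def diag3_def sum_3 var3_def)

lemma cf_lin_subst_diag3:
  assumes "bnd N F"
  shows "cf (lin_subst (diag3 a b c) F) i j k = a ^ i * b ^ j * c ^ k * cf F i j k"
proof -
  have "lin_subst (diag3 a b c) F =
     (\<Sum>(i,j,k)\<in>BB N. mon (a ^ i * b ^ j * c ^ k * cf F i j k) i j k)"
    unfolding lin_subst_diag3 eval3_rep[OF assms]
    by (rule sum.cong) (auto simp: mon_def power_mult_distrib const3_mult const3_power algebra_simps)
  then show ?thesis using assms by (cases "cf F i j k = 0") (auto simp: cf_sum_mon bnd_def)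
qed

lemma factor_mon:
  assumes "bnd N F" and "\<forall>i j k. cf F i j k \<noteq> 0 \<longrightarrow> a \<le> i \<and> b \<le> j \<and> d \<le> k"
  shows "F = mon 1 a b d * (\<Sum>(i,j,k)\<in>BB N. mon (cf F i j k) (i - a) (j - b) (k - d))"
proof -
  have "F = (\<Sum>(i,j,k)\<in>BB N. mon (cf F i j k) i j k)" by (rule rep[OF assms(1)])
  also have "\<dots> = (\<Sum>(i,j,k)\<in>BB N. mon 1 a b d * mon (cf F i j k) (i - a) (j - b) (k - d))"
  proof (rule sum.cong)
    fix x assume "x \<in> BB N"
    obtain i j k where x: "x = (i,j,k)" by (cases x) auto
    show "(case x of (i,j,k) \<Rightarrow> mon (cf F i j k) i j k) =
          (case x of (i,j,k) \<Rightarrow> mon 1 a b d * mon (cf F i j k) (i - a) (j - b) (k - d))"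
      using assms(2)[rule_format, of i j k] unfolding x
      by (cases "cf F i j k = 0") (auto simp: mon_mult)
  qed simp
  also have "\<dots> = mon 1 a b d * (\<Sum>(i,j,k)\<in>BB N. mon (cf F i j k) (i - a) (j - b) (k - d))"
    by (simp add: sum_distrib_left case_prod_beta)
  finally show ?thesis .
qed

lemma unit_pp3:
  assumes "is_unit (G::'k::field pp3)" shows "\<exists>x. x \<noteq> 0 \<and> G = const3 x"
proof -
  from assms obtain g where g: "G = [:g:]" "g dvd 1" by (rule is_unit_polyE)
  from g(2) obtain h where h: "g = [:h:]" "h dvd 1" by (rule is_unit_polyE)
  from h(2) obtain x where x: "h = [:x:]" "x dvd 1" by (rule is_unit_polyE)
  have "x \<noteq> 0" using x(2) by auto
  then show ?thesis using g h x by (auto simp: const3_def)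
qed

lemma irr_var:
  fixes F :: "'k::field pp3"
  assumes "irreducible F" "homog N F" "2 \<le> N" "a + b + d = 1" "F = mon 1 a b d * G"
  shows False
proof -
  from irreducibleD[OF assms(1) assms(5)] show False
  proof
    assume "is_unit (mon (1::'k) a b d)"
    then obtain x where "mon (1::'k) a b d = const3 x" using unit_pp3 by metis
    then have "cf (mon (1::'k) a b d) a b d = cf (mon x 0 0 0) a b d" by (simp only: const3_mon)
    then have "(1::'k) = (if a = 0 \<and> b = 0 \<and> d = 0 then x else 0)" by (simp only: cf_mon) simp
    then show False using assms(4) by (simp split: if_splits)
  next
    assume "is_unit G"
    then obtain x where x: "x \<noteq> 0" "G = const3 x" using unit_pp3 by blast
    then have "F = mon x a b d" using assms(5) by (simp only: const3_mon mon_mult) simp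
    then have "cf F a b d \<noteq> 0" using x by (simp add: cf_mon)
    then have "a + b + d = N" using assms(2) unfolding homog_def cf_def by blast
    then show False using assms(3,4) by simp
  qed
qed

lemma zero_exp:
  fixes F :: "'k::field pp3"
  assumes "irreducible F" "homog N F" "2 \<le> N" "a + b + d = 1"
  shows "\<exists>i j k. cf F i j k \<noteq> 0 \<and> \<not> (a \<le> i \<and> b \<le> j \<and> d \<le> k)"
  using irr_var[OF assms factor_mon[OF homog_bnd[OF assms(2)]]] by blast

lemma card_roots_sep:
  fixes P :: "'k::field poly"
  assumes alg: "\<And>P::'k poly. degree P > 0 \<Longrightarrow> \<exists>x. poly P x = 0"
  shows "P \<noteq> 0 \<Longrightarrow> (\<forall>x. poly P x = 0 \<longrightarrow> poly (pderiv P) x \<noteq> 0) \<Longrightarrow>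
     card {x. poly P x = 0} = degree P"
proof (induction "degree P" arbitrary: P)
  case 0
  then obtain c where "P = [:c:]" "c \<noteq> 0" by (metis degree_eq_zeroE pCons_0_0)
  then show ?case by simp
next
  case (Suc d)
  then obtain a where a: "poly P a = 0" using alg by (metis zero_less_Suc)
  then obtain Q where Q: "P = [:-a, 1:] * Q" using poly_eq_0_iff_dvd by blast
  have Q0: "Q \<noteq> 0" using Q Suc.prems by auto
  have "degree P = 1 + degree Q" unfolding Q using Q0 by (subst degree_mult_eq) auto
  then have dQ: "degree Q = d" using Suc.hyps(2) by simp
  have dP: "pderiv P = Q + [:-a, 1:] * pderiv Q" unfolding Q pderiv_mult by (simp add: pderiv_pCons)
  have Qa: "poly Q a \<noteq> 0" using Suc.prems(2) a dP by auto
  have "\<forall>x. poly Q x = 0 \<longrightarrow> poly (pderiv Q) x \<noteq> 0"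
  proof (intro allI impI)
    fix x assume x: "poly Q x = 0"
    then have "poly P x = 0" using Q by simp
    then have "poly (pderiv P) x \<noteq> 0" using Suc.prems(2) by blast
    then show "poly (pderiv Q) x \<noteq> 0" using dP x by simp
  qed
  then have IH: "card {x. poly Q x = 0} = d" using Suc.hyps(1)[OF dQ[symmetric] Q0] dQ by simp
  have "{x. poly P x = 0} = insert a {x. poly Q x = 0}" using Q by auto
  moreover have "a \<notin> {x. poly Q x = 0}" using Qa by simp
  ultimately have "card {x. poly P x = 0} = Suc d"
    using IH poly_roots_finite[OF Q0] by simp
  then show ?case using Suc.hyps(2) by simp
qed

lemma card_unity:
  fixes n :: nat
  assumes alg: "\<And>P::'k::field poly. degree P > 0 \<Longrightarrow> \<exists>x. poly P x = 0"
    and n: "n \<ge> 1" "of_nat n \<noteq> (0::'k)"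
  shows "card {x::'k. x ^ n = 1} = n"
proof -
  define P :: "'k poly" where "P = [:0,1:] ^ n + [:-1:]"
  have dP: "degree P = n" unfolding P_def using n
    by (subst degree_add_eq_left) (auto simp: degree_power_eq)
  have P0: "P \<noteq> 0" using dP n by auto
  have roots: "{x. poly P x = 0} = {x. x ^ n = 1}" by (auto simp: P_def)
  have der: "pderiv P = smult (of_nat n) ([:0,1:] ^ (n - 1))"
    by (simp add: P_def pderiv_add pderiv_power pderiv_pCons)
  have "\<forall>x. poly P x = 0 \<longrightarrow> poly (pderiv P) x \<noteq> 0"
  proof (intro allI impI)
    fix x assume "poly P x = 0"
    then have "x ^ n = 1" by (simp add: P_def)
    then have "x \<noteq> 0" using n by (auto simp: power_0_left)
    then show "poly (pderiv P) x \<noteq> 0" using n by (simp add: der)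
  qed
  then show ?thesis using card_roots_sep[OF alg P0] dP roots by simp
qed

lemma unity_dvd:
  fixes n i :: nat
  assumes alg: "\<And>P::'k::field poly. degree P > 0 \<Longrightarrow> \<exists>x. poly P x = 0"
    and n: "n \<ge> 1" "of_nat n \<noteq> (0::'k)"
    and H: "\<And>x::'k. x ^ n = 1 \<Longrightarrow> x ^ i = 1"
  shows "n dvd i"
proof (rule ccontr)
  assume nd: "\<not> n dvd i"
  define r where "r = i mod n"
  have r: "0 < r" "r < n" using nd n unfolding r_def by (auto simp: dvd_eq_mod_eq_0)
  have "\<And>x::'k. x ^ n = 1 \<Longrightarrow> x ^ r = 1"
  proof -
    fix x :: 'k assume x: "x ^ n = 1"
    have "x ^ i = x ^ (n * (i div n) + r)" by (simp add: r_def)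
    also have "\<dots> = x ^ r" by (simp add: power_add power_mult x)
    finally show "x ^ r = 1" using H[OF x] by simp
  qed
  define P :: "'k poly" where "P = [:0,1:] ^ r + [:-1:]"
  have dP: "degree P = r" unfolding P_def using r
    by (subst degree_add_eq_left) (auto simp: degree_power_eq)
  have P0: "P \<noteq> 0" using dP r by auto
  have "{x::'k. x ^ n = 1} \<subseteq> {x. poly P x = 0}" using \<open>\<And>x. x ^ n = 1 \<Longrightarrow> x ^ r = 1\<close>
    by (auto simp: P_def)
  then have "card {x::'k. x ^ n = 1} \<le> card {x. poly P x = 0}"
    using poly_roots_finite[OF P0] by (rule card_mono[rotated])
  also have "\<dots> \<le> r" using card_poly_roots_bound[OF P0] dP by simp
  finally show False using card_unity[OF alg n] r by simp
qed

lemma pow_q_self: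
  assumes "x ^ (q - 1) = (1::'k::field)" "1 \<le> q" shows "x ^ q = x"
proof -
  have "q = Suc (q - 1)" using assms(2) by simp
  then have "x ^ q = x * x ^ (q - 1)" by (metis power_Suc)
  then show ?thesis using assms(1) by simp
qed

lemma diag_Delta:
  fixes a b c :: "'k::field"
  assumes q: "2 \<le> q" and ab: "a ^ (q - 1) = 1" "b ^ (q - 1) = 1" "c ^ (q - 1) = 1"
  shows "diag3 a b c \<in> Delta q"
proof -
  have e: "a ^ q = a" "b ^ q = b" "c ^ q = c" using ab q by (auto intro: pow_q_self)
  have nz: "a \<noteq> 0" "b \<noteq> 0" "c \<noteq> 0" using ab q by (auto simp: power_0_left)
  have z: "(0::'k) ^ q = 0" using q by simp
  have "\<forall>i j. (diag3 a b c $ i $ j) ^ q = diag3 a b c $ i $ j"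
    unfolding diag3_def using e z by (simp add: forall_3)
  moreover have "det (diag3 a b c) \<noteq> 0" using nz by (simp add: det_3 diag3_def)
  moreover have "\<forall>i. \<exists>j e. e \<noteq> 0 \<and> diag3 a b c *v axis i 1 = e *s axis j 1"
  proof (unfold forall_3, intro conjI)
    show "\<exists>j e. e \<noteq> 0 \<and> diag3 a b c *v axis 1 1 = e *s axis j 1"
      using nz by (intro exI[of _ 1] exI[of _ a])
        (simp add: vec_eq_iff forall_3 matrix_vector_mult_def sum_3 axis_def diag3_def)
    show "\<exists>j e. e \<noteq> 0 \<and> diag3 a b c *v axis 2 1 = e *s axis j 1"
      using nz by (intro exI[of _ 2] exI[of _ b])
        (simp add: vec_eq_iff forall_3 matrix_vector_mult_def sum_3 axis_def diag3_def)
    show "\<exists>j e. e \<noteq> 0 \<and> diag3 a b c *v axis 3 1 = e *s axis j 1"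
      using nz by (intro exI[of _ 3] exI[of _ c])
        (simp add: vec_eq_iff forall_3 matrix_vector_mult_def sum_3 axis_def diag3_def)
  qed
  ultimately show ?thesis by (simp add: Delta_def PGL3_def)
qed

lemma diag_char:
  fixes F :: "'k::field pp3" and a b c :: 'k
  assumes "invariant (Delta q) F" "bnd N F" "diag3 a b c \<in> Delta q"
    "cf F i j k \<noteq> 0" "cf F i' j' k' \<noteq> 0"
  shows "a ^ i * b ^ j * c ^ k = a ^ i' * b ^ j' * c ^ k'"
proof -
  obtain e where e: "lin_subst (diag3 a b c) F = const3 e * F"
    using assms(1,3) unfolding invariant_def by blast
  have h: "a ^ i * b ^ j * c ^ k * cf F i j k = e * cf F i j k" for i j k
  proof -
    have "cf (lin_subst (diag3 a b c) F) i j k = cf (const3 e * F) i j k" by (simp only: e)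
    then show ?thesis by (simp only: cf_lin_subst_diag3[OF assms(2)] cf_const3_mult)
  qed
  have "a ^ i * b ^ j * c ^ k = e" using h[of i j k] assms(4) by simp
  moreover have "a ^ i' * b ^ j' * c ^ k' = e" using h[of i' j' k'] assms(5) by simp
  ultimately show ?thesis by simp
qed

lemma ofnat_qm1:
  assumes "of_nat q = (0::'k::field)" "1 \<le> q"
  shows "of_nat (q - 1) = (-1::'k)"
proof -
  obtain m where m: "q = Suc m" using assms(2) by (cases q) auto
  have "(0::'k) = 1 + of_nat m" using assms(1) unfolding m by simp
  then show ?thesis unfolding m by (simp add: eq_neg_iff_add_eq_0 add.commute)
qed

lemma support_dvd:
  fixes F :: "'k::field pp3"
  assumes alg: "\<And>P::'k poly. degree P > 0 \<Longrightarrow> \<exists>x. poly P x = 0"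
    and q: "3 \<le> q" and ch: "of_nat q = (0::'k)"
    and inv: "inv_irr_curve (Delta q) N F" and N: "2 \<le> N" and s: "cf F i j k \<noteq> 0"
  shows "(q - 1) dvd i \<and> (q - 1) dvd j \<and> (q - 1) dvd k"
proof -
  have n1: "q - 1 \<ge> 1" using q by simp
  have n0: "of_nat (q - 1) \<noteq> (0::'k)" using ofnat_qm1[OF ch] q by simp
  have hom: "homog N F" and irr: "irreducible F" and iv: "invariant (Delta q) F"
    using inv by (auto simp: inv_irr_curve_def)
  have bd: "bnd N F" using homog_bnd[OF hom] .
  have q2: "2 \<le> q" using q by simp
  obtain i0 j0 k0 where s0: "cf F i0 j0 k0 \<noteq> 0" "i0 = 0"
    using zero_exp[OF irr hom N, of 1 0 0] by (auto simp: Suc_le_eq)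
  obtain i1 j1 k1 where s1: "cf F i1 j1 k1 \<noteq> 0" "j1 = 0"
    using zero_exp[OF irr hom N, of 0 1 0] by (auto simp: Suc_le_eq)
  obtain i2 j2 k2 where s2: "cf F i2 j2 k2 \<noteq> 0" "k2 = 0"
    using zero_exp[OF irr hom N, of 0 0 1] by (auto simp: Suc_le_eq)
  have "(q - 1) dvd i"
  proof (rule unity_dvd[OF alg n1 n0])
    fix x :: 'k assume "x ^ (q - 1) = 1"
    then have "diag3 x 1 1 \<in> Delta q" using q2 by (intro diag_Delta) auto
    from diag_char[OF iv bd this s s0(1)] s0(2) show "x ^ i = 1" by simp
  qed
  moreover have "(q - 1) dvd j"
  proof (rule unity_dvd[OF alg n1 n0])
    fix x :: 'k assume "x ^ (q - 1) = 1"
    then have "diag3 1 x 1 \<in> Delta q" using q2 by (intro diag_Delta) auto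
    from diag_char[OF iv bd this s s1(1)] s1(2) show "x ^ j = 1" by simp
  qed
  moreover have "(q - 1) dvd k"
  proof (rule unity_dvd[OF alg n1 n0])
    fix x :: 'k assume "x ^ (q - 1) = 1"
    then have "diag3 1 1 x \<in> Delta q" using q2 by (intro diag_Delta) auto
    from diag_char[OF iv bd this s s2(1)] s2(2) show "x ^ k = 1" by simp
  qed
  ultimately show ?thesis by simp
qed

lemma degree_dvd:
  fixes F :: "'k::field pp3"
  assumes alg: "\<And>P::'k poly. degree P > 0 \<Longrightarrow> \<exists>x. poly P x = 0"
    and q: "3 \<le> q" and ch: "of_nat q = (0::'k)"
    and inv: "inv_irr_curve (Delta q) N F" and N: "2 \<le> N"
  shows "(q - 1) dvd N"
proof -
  have hom: "homog N F" using inv by (simp add: inv_irr_curve_def)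
  then have "F \<noteq> 0" by (simp add: homog_def)
  then obtain i j k where s: "cf F i j k \<noteq> 0" using cf_eq_iff[of F 0] by auto
  then have "i + j + k = N" using hom unfolding homog_def cf_def by blast
  with support_dvd[OF alg q ch inv N s] show ?thesis by auto
qed

lemma eis_half:
  fixes f G H :: "'a::idom poly"
  assumes pr: "prime_elem pr0" and fGH: "f = G * H"
    and mid: "\<forall>i. 0 < i \<and> i < degree f \<longrightarrow> coeff f i = 0"
    and lead: "\<not> pr0 dvd lead_coeff f"
    and g0: "pr0 dvd coeff G 0" and h0: "\<not> pr0 dvd coeff H 0"
  shows "degree H = 0"
proof (rule ccontr)
  assume dH: "degree H \<noteq> 0"
  have f0: "f \<noteq> 0" using lead by auto
  then have G0: "G \<noteq> 0" and H0: "H \<noteq> 0" using fGH by auto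
  have df: "degree f = degree G + degree H" using fGH G0 H0 by (simp add: degree_mult_eq)
  have all: "i < degree f \<Longrightarrow> pr0 dvd coeff G i" for i
  proof (induction i rule: less_induct)
    case (less i)
    show ?case
    proof (cases i)
      case 0 then show ?thesis using g0 by simp
    next
      case (Suc i')
      have "coeff f i = 0" using mid less.prems Suc by simp
      then have "(\<Sum>l\<le>i. coeff G l * coeff H (i - l)) = 0" using fGH by (simp add: coeff_mult)
      then have e: "(\<Sum>l\<le>i'. coeff G l * coeff H (i - l)) + coeff G i * coeff H 0 = 0"
        using Suc by simp
      have "pr0 dvd (\<Sum>l\<le>i'. coeff G l * coeff H (i - l))"
      proof (rule dvd_sum)
        fix l assume "l \<in> {..i'}"
        then have "l < i" using Suc by simp
        then have "pr0 dvd coeff G l" using less.IH less.prems by simp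
        then show "pr0 dvd coeff G l * coeff H (i - l)" by simp
      qed
      moreover have "coeff G i * coeff H 0 = - (\<Sum>l\<le>i'. coeff G l * coeff H (i - l))"
        using e by (simp add: eq_neg_iff_add_eq_0 add.commute)
      ultimately have "pr0 dvd coeff G i * coeff H 0" by simp
      then show ?thesis using h0 pr by (simp add: prime_elem_dvd_mult_iff)
    qed
  qed
  have "degree G < degree f" using df dH by simp
  then have "pr0 dvd lead_coeff G" using all by simp
  then have "pr0 dvd lead_coeff f" using fGH by (simp add: lead_coeff_mult)
  then show False using lead by simp
qed

lemma eis_core:
  fixes f G H :: "'a::idom poly"
  assumes pr: "prime_elem pr0" and fGH: "f = G * H"
    and mid: "\<forall>i. 0 < i \<and> i < degree f \<longrightarrow> coeff f i = 0"
    and c0: "pr0 dvd coeff f 0" and c0': "\<not> pr0 ^ 2 dvd coeff f 0"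
    and lead: "\<not> pr0 dvd lead_coeff f"
  shows "degree G = 0 \<or> degree H = 0"
proof -
  have m: "coeff f 0 = coeff G 0 * coeff H 0" using fGH by (simp add: coeff_mult_0)
  then have "pr0 dvd coeff G 0 \<or> pr0 dvd coeff H 0" using c0 pr by (simp add: prime_elem_dvd_mult_iff)
  moreover have "\<not> (pr0 dvd coeff G 0 \<and> pr0 dvd coeff H 0)"
  proof
    assume "pr0 dvd coeff G 0 \<and> pr0 dvd coeff H 0"
    then have "pr0 * pr0 dvd coeff G 0 * coeff H 0" by (auto intro: mult_dvd_mono)
    then show False using c0' m by (simp add: power2_eq_square)
  qed
  ultimately show ?thesis
  proof (elim disjE)
    assume "pr0 dvd coeff G 0"
    then have "degree H = 0"
      using eis_half[OF pr fGH mid lead] \<open>\<not> (pr0 dvd coeff G 0 \<and> pr0 dvd coeff H 0)\<close> by blast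
    then show ?thesis by simp
  next
    assume "pr0 dvd coeff H 0"
    have fHG: "f = H * G" using fGH by (simp add: mult.commute)
    then have "degree G = 0"
      using eis_half[OF pr fHG mid lead] \<open>pr0 dvd coeff H 0\<close>
        \<open>\<not> (pr0 dvd coeff G 0 \<and> pr0 dvd coeff H 0)\<close> by blast
    then show ?thesis by simp
  qed
qed

lemma two_term_props:
  fixes a b :: "'a::idom"
  assumes "n \<ge> 1" "a \<noteq> 0"
  shows "degree (monom a n + [:b:]) = n" "coeff (monom a n + [:b:]) 0 = b"
    "lead_coeff (monom a n + [:b:]) = a"
    "\<forall>i. 0 < i \<and> i < n \<longrightarrow> coeff (monom a n + [:b:]) i = 0"
proof -
  show d: "degree (monom a n + [:b:]) = n" using assms
    by (subst degree_add_eq_left) (auto simp: degree_monom_eq)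
  show "coeff (monom a n + [:b:]) 0 = b" using assms by (simp add: coeff_monom)
  show "lead_coeff (monom a n + [:b:]) = a" unfolding d using assms by (cases n) (auto simp: coeff_monom)
  show "\<forall>i. 0 < i \<and> i < n \<longrightarrow> coeff (monom a n + [:b:]) i = 0"
    by (auto simp: coeff_monom coeff_pCons split: nat.split)
qed

lemma two_term_irr:
  fixes a b :: "'a::idom"
  assumes pr: "prime_elem pr0" and n: "n \<ge> 1" and a0: "a \<noteq> 0" and b0: "b \<noteq> 0"
    and cond: "(\<not> pr0 dvd a \<and> pr0 dvd b \<and> \<not> pr0 ^ 2 dvd b) \<or> (\<not> pr0 dvd b \<and> pr0 dvd a \<and> \<not> pr0 ^ 2 dvd a)"
    and cop: "\<And>h. h dvd a \<Longrightarrow> h dvd b \<Longrightarrow> h dvd 1"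
  shows "irreducible (monom a n + [:b:])"
proof -
  define f where "f = monom a n + [:b:]"
  note P = two_term_props[OF n a0, of b, folded f_def]
  have f0: "f \<noteq> 0" using P(3) a0 by auto
  have nu: "\<not> f dvd 1"
  proof
    assume "f dvd 1"
    then obtain c where "f = [:c:]" by (rule is_unit_polyE)
    then show False using P(1) n by simp
  qed
  have dd: "degree G = 0 \<or> degree H = 0" if fGH: "f = G * H" for G H
  proof -
    from cond show ?thesis
    proof
      assume c: "\<not> pr0 dvd a \<and> pr0 dvd b \<and> \<not> pr0 ^ 2 dvd b"
      show ?thesis by (rule eis_core[OF pr fGH]) (use P c in simp_all)
    next
      assume c: "\<not> pr0 dvd b \<and> pr0 dvd a \<and> \<not> pr0 ^ 2 dvd a"
      have G0: "coeff G 0 \<noteq> 0" and H0: "coeff H 0 \<noteq> 0"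
        using P(2) b0 fGH by (auto simp: coeff_mult_0)
      have rf: "reflect_poly f = reflect_poly G * reflect_poly H"
        using fGH by (simp add: reflect_poly_mult)
      have fc0: "coeff f 0 \<noteq> 0" using P(2) b0 by simp
      have dr: "degree (reflect_poly f) = n" using P(1) fc0 by simp
      have "degree (reflect_poly G) = 0 \<or> degree (reflect_poly H) = 0"
      proof (rule eis_core[OF pr rf])
        show "\<forall>i. 0 < i \<and> i < degree (reflect_poly f) \<longrightarrow> coeff (reflect_poly f) i = 0"
          using P(4) P(1) dr by (auto simp: coeff_reflect_poly)
        show "pr0 dvd coeff (reflect_poly f) 0" using P(3) c by simp
        show "\<not> pr0 ^ 2 dvd coeff (reflect_poly f) 0" using P(3) c by simp
        show "\<not> pr0 dvd lead_coeff (reflect_poly f)" using P(1,2) dr c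
          by (simp add: coeff_reflect_poly)
      qed
      then show ?thesis using G0 H0 by simp
    qed
  qed
  have "irreducible f"
  proof (rule irreducibleI)
    show "f \<noteq> 0" by (rule f0)
    show "\<not> f dvd 1" by (rule nu)
    fix G H assume fGH: "f = G * H"
    have cu: "h dvd 1" if "f = smult h K" for h K
    proof (rule cop)
      have "coeff f n = h * coeff K n" "coeff f 0 = h * coeff K 0" using that by simp_all
      moreover have "coeff f n = a" using P(1,3) by simp
      ultimately show "h dvd a" "h dvd b" using P(2) by auto
    qed
    from dd[OF fGH] show "G dvd 1 \<or> H dvd 1"
    proof
      assume "degree G = 0"
      then obtain g where g: "G = [:g:]" by (rule degree_eq_zeroE)
      then have "f = smult g H" using fGH by simp
      then have "g dvd 1" by (rule cu)
      then show ?thesis using g by (simp add: is_unit_const_poly_iff)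
    next
      assume "degree H = 0"
      then obtain g where g: "H = [:g:]" by (rule degree_eq_zeroE)
      then have "f = smult g G" using fGH by (simp add: mult.commute)
      then have "g dvd 1" by (rule cu)
      then show ?thesis using g by (simp add: is_unit_const_poly_iff)
    qed
  qed
  then show ?thesis by (simp add: f_def)
qed

definition xR :: "'k::comm_ring_1 poly poly" where "xR = [:[:0,1:]:]"
definition yR :: "'k::comm_ring_1 poly poly" where "yR = [:0,1:]"

lemma Xv_R: "Xv = [:xR:]" by (simp add: Xv_def xR_def monom_Suc)
lemma Yv_R: "Yv = [:yR:]" by (simp add: Yv_def yR_def monom_Suc)
lemma Zv_R: "Zv = [:0,1:]" by (simp add: Zv_def monom_Suc)

lemma cpow: "[:c:] ^ n = [:c ^ n:]" for c :: "'a::comm_ring_1"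
  by (induct n) (simp_all add: one_pCons mult.commute)

lemma xpow: "([:0,1:] :: 'a::comm_ring_1 poly) ^ n = monom 1 n"
proof -
  have "([:0,1:] :: 'a poly) = monom 1 1" by (simp add: monom_Suc)
  then show ?thesis by (simp add: monom_power)
qed

lemma fermat_R: "fermat q = monom 1 (q - 1) + [:xR ^ (q - 1) + yR ^ (q - 1):]"
  by (simp add: fermat_def Xv_R Yv_R Zv_R cpow xpow)

lemma monom_const_mult: "[:c:] * monom 1 n = monom c n" for c :: "'a::comm_ring_1"
  by (simp add: smult_monom)

lemma Xv_pow: "Xv ^ n = [:xR ^ n:]" by (simp add: Xv_R cpow)
lemma Yv_pow: "Yv ^ n = [:yR ^ n:]" by (simp add: Yv_R cpow)
lemma Zv_pow: "Zv ^ n = monom 1 n" by (simp add: Zv_R xpow)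

lemma fam0_R: "fam q 0 = monom (xR ^ (q - 1) + yR ^ (q - 1)) (q - 1) + [:xR ^ (q - 1) * yR ^ (q - 1):]"
proof -
  define n where "n = q - 1"
  have "fam q 0 = Xv ^ n * Yv ^ n + Yv ^ n * Zv ^ n + Zv ^ n * Xv ^ n"
    by (simp add: fam_def power_mult_distrib n_def)
  also have "\<dots> = [:xR ^ n:] * [:yR ^ n:] + [:yR ^ n:] * monom 1 n + [:xR ^ n:] * monom 1 n"
    by (simp only: Xv_pow Yv_pow Zv_pow mult.commute[of "monom 1 n"])
  also have "\<dots> = [:xR ^ n * yR ^ n:] + monom (yR ^ n) n + monom (xR ^ n) n"
    by (simp only: monom_const_mult) simp
  also have "\<dots> = monom (xR ^ n + yR ^ n) n + [:xR ^ n * yR ^ n:]"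
    by (simp add: add_monom[symmetric] algebra_simps)
  finally show ?thesis by (simp add: n_def)
qed

lemma lin_prime: "prime_elem [:-r, 1:]" for r :: "'a::idom"
proof (rule prime_elemI)
  show "[:-r, 1:] \<noteq> 0" by simp
  show "\<not> [:-r, 1:] dvd 1"
  proof
    assume "[:-r, 1:] dvd 1"
    then obtain c where "[:-r, 1:] = [:c:]" by (rule is_unit_polyE)
    then show False by simp
  qed
  fix a b assume "[:-r, 1:] dvd a * b"
  then have "poly (a * b) r = 0" by (simp only: poly_eq_0_iff_dvd)
  then have "poly a r = 0 \<or> poly b r = 0" by simp
  then show "[:-r, 1:] dvd a \<or> [:-r, 1:] dvd b" by (simp only: poly_eq_0_iff_dvd)
qed

lemma sq_dvd_pderiv:
  fixes p :: "'a::idom poly"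
  assumes "[:-r, 1:] ^ 2 dvd p" shows "poly (pderiv p) r = 0"
proof -
  from assms obtain g where "p = [:-r, 1:] ^ 2 * g" by (rule dvdE)
  then have g: "p = [:-r, 1:] * ([:-r, 1:] * g)" by (simp only: power2_eq_square mult.assoc)
  show ?thesis unfolding g pderiv_mult by (simp add: pderiv_pCons)
qed

lemma pderiv_const: "pderiv [:c:] = 0" by (simp add: pderiv_pCons)

context
  fixes n :: nat and z :: "'k::field"
  assumes n1: "n \<ge> 1" and nz: "of_nat n \<noteq> (0::'k)" and zn: "z ^ n = -1"
begin

private definition "rr = [:0, z:]"
private definition "PP = [:-rr, 1:]"

private lemma z0: "z \<noteq> 0" using zn n1 by (auto simp: power_0_left)

private lemma rr_pow: "rr ^ m = smult (z ^ m) ([:0,1:] ^ m)"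
proof -
  have "rr = smult z [:0,1:]" by (simp add: rr_def)
  then show ?thesis by (simp only: smult_power)
qed

private lemma polyA: "poly (xR ^ n + yR ^ n) rr = 0"
  by (simp add: xR_def yR_def cpow rr_pow zn)

private lemma polyB: "poly (xR ^ n * yR ^ n) rr \<noteq> 0"
  by (simp add: xR_def yR_def cpow rr_pow zn z0)

private lemma PA: "PP dvd xR ^ n + yR ^ n"
  using polyA unfolding PP_def by (simp only: poly_eq_0_iff_dvd)

private lemma PB: "\<not> PP dvd xR ^ n * yR ^ n"
  using polyB unfolding PP_def by (metis poly_eq_0_iff_dvd)

private lemma PA2: "\<not> PP ^ 2 dvd xR ^ n + yR ^ n"
proof
  assume "PP ^ 2 dvd xR ^ n + yR ^ n"
  then have e1: "poly (pderiv (xR ^ n + yR ^ n)) rr = 0" unfolding PP_def by (rule sq_dvd_pderiv)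
  have e2: "pderiv (xR ^ n + yR ^ n) = smult (of_nat n) (yR ^ (n - 1))"
    by (simp add: pderiv_add xR_def yR_def cpow pderiv_const pderiv_power pderiv_pCons)
  have e3: "(of_nat n :: 'k poly) \<noteq> 0" using nz by (simp add: of_nat_poly)
  have e4: "rr \<noteq> 0" using z0 by (simp add: rr_def)
  have e5: "poly (smult (of_nat n) (yR ^ (n - 1))) rr = of_nat n * rr ^ (n - 1)"
    by (simp add: yR_def)
  have "of_nat n * rr ^ (n - 1) = 0" using e1 unfolding e2 e5 .
  then show False using e3 e4 by simp
qed

private lemma PPprime: "prime_elem PP" unfolding PP_def by (rule lin_prime)

lemma fermat_R_irr: "irreducible (monom 1 n + [:xR ^ n + yR ^ n:] :: 'k pp3)"
proof (rule two_term_irr[OF PPprime n1])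
  show "(1::'k poly poly) \<noteq> 0" by simp
  show "xR ^ n + yR ^ n \<noteq> (0::'k poly poly)" by (metis PA2 dvd_0_right)
  show "\<not> PP dvd 1 \<and> PP dvd xR ^ n + yR ^ n \<and> \<not> PP ^ 2 dvd xR ^ n + yR ^ n \<or>
    \<not> PP dvd xR ^ n + yR ^ n \<and> PP dvd 1 \<and> \<not> PP ^ 2 dvd 1"
    using PA PA2 prime_elem_not_unit[OF PPprime] by blast
  show "\<And>h. h dvd 1 \<Longrightarrow> h dvd xR ^ n + yR ^ n \<Longrightarrow> h dvd 1" by simp
qed

lemma fam0_R_irr: "irreducible (monom (xR ^ n + yR ^ n) n + [:xR ^ n * yR ^ n:] :: 'k pp3)"
proof (rule two_term_irr[OF PPprime n1])
  show "xR ^ n + yR ^ n \<noteq> (0::'k poly poly)" by (metis PA2 dvd_0_right)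
  show "xR ^ n * yR ^ n \<noteq> (0::'k poly poly)" by (metis PB dvd_0_right)
  show "\<not> PP dvd xR ^ n + yR ^ n \<and> PP dvd xR ^ n * yR ^ n \<and> \<not> PP ^ 2 dvd xR ^ n * yR ^ n \<or>
    \<not> PP dvd xR ^ n * yR ^ n \<and> PP dvd xR ^ n + yR ^ n \<and> \<not> PP ^ 2 dvd xR ^ n + yR ^ n"
    using PA PA2 PB by blast
  fix h :: "'k poly poly"
  assume h1: "h dvd xR ^ n + yR ^ n" and h2: "h dvd xR ^ n * yR ^ n"
  have "h dvd xR ^ n * (xR ^ n + yR ^ n) - xR ^ n * yR ^ n" using h1 h2 by simp
  then have hx: "h dvd xR ^ n * xR ^ n" by (simp add: algebra_simps)
  have "h dvd yR ^ n * (xR ^ n + yR ^ n) - xR ^ n * yR ^ n" using h1 h2 by simp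
  then have hy: "h dvd yR ^ n * yR ^ n" by (simp add: algebra_simps)
  have "xR ^ n * xR ^ n \<noteq> (0::'k poly poly)" by (simp add: xR_def)
  then have "degree h \<le> degree (xR ^ n * xR ^ n :: 'k poly poly)" using hx by (simp add: dvd_imp_degree_le)
  then have "degree h = 0" by (simp add: xR_def cpow)
  then obtain h0 where h0: "h = [:h0:]" by (rule degree_eq_zeroE)
  have "h0 dvd coeff (yR ^ n * yR ^ n :: 'k poly poly) (n + n)" using hy unfolding h0 const_poly_dvd_iff by blast
  then have "h0 dvd 1" by (simp add: yR_def xpow mult_monom)
  then show "h dvd 1" using h0 by (simp add: is_unit_const_poly_iff)
qed

end


lemma cases3: fixes x :: 3 obtains "x = 1" | "x = 2" | "x = 3" using exhaust_3 by blast

lemma mv_axis: "(M *v axis i 1) $ r = M $ r $ i" for M :: "'a::comm_ring_1^3^3"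
  by (cases i rule: cases3; cases r rule: cases3)
     (simp_all add: matrix_vector_mult_def axis_def sum_3)

lemma smult_axis: "(e *s axis j 1) $ r = (if r = j then e else 0)" for e :: "'a::comm_ring_1"
  by (simp add: axis_def)

lemma pow1_of_self:
  assumes "c ^ q = c" "c \<noteq> (0::'k::field)" "1 \<le> q" shows "c ^ (q - 1) = 1"
proof -
  have "q = Suc (q - 1)" using assms(3) by simp
  then have "c * c ^ (q - 1) = c * 1" using assms(1) by (metis power_Suc mult_1_right)
  then show ?thesis using assms(2) by simp
qed

lemma Delta_struct:
  fixes M :: "'k::field^3^3"
  assumes M: "M \<in> Delta q" and q: "2 \<le> q"
  shows "\<exists>s c. (\<forall>i. c i \<noteq> 0 \<and> c i ^ (q - 1) = 1) \<and> (\<forall>r i. M $ r $ i = (if r = s i then c i else 0))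
           \<and> det M \<noteq> 0"
proof -
  have "\<forall>i. \<exists>jc. snd jc \<noteq> 0 \<and> M *v axis i 1 = snd jc *s axis (fst jc) 1"
    using M unfolding Delta_def by force
  then obtain f where f: "\<forall>i. snd (f i) \<noteq> 0 \<and> M *v axis i 1 = snd (f i) *s axis (fst (f i)) 1"
    by metis
  have ent: "M $ r $ i = (if r = fst (f i) then snd (f i) else 0)" for r i
    using arg_cong[OF conjunct2[OF f[rule_format, of i]], of "\<lambda>v. v $ r"]
    unfolding mv_axis smult_axis .
  have pq: "\<forall>i j. (M $ i $ j) ^ q = M $ i $ j" and dt: "det M \<noteq> 0"
    using M unfolding Delta_def PGL3_def by auto
  have "snd (f i) ^ q = snd (f i)" for i using pq[rule_format, of "fst (f i)" i] by (simp add: ent)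
  then have "snd (f i) ^ (q - 1) = 1" for i using f q by (intro pow1_of_self) auto
  then show ?thesis using f ent dt by (intro exI[of _ "\<lambda>i. fst (f i)"] exI[of _ "\<lambda>i. snd (f i)"]) auto
qed


definition linf :: "'k::comm_ring_1^3^3 \<Rightarrow> 3 \<Rightarrow> 'k pp3" where
  "linf M r = (\<Sum>j\<in>UNIV. const3 (M $ r $ j) * var3 j)"

lemma lin_subst_linf: "lin_subst M F = eval3 F (linf M 1) (linf M 2) (linf M 3)"
  by (simp add: lin_subst_def linf_def)

definition perm6 :: "'a \<Rightarrow> 'a \<Rightarrow> 'a \<Rightarrow> ('a \<times> 'a \<times> 'a) set" where
  "perm6 x y z = {(x,y,z),(x,z,y),(y,x,z),(y,z,x),(z,x,y),(z,y,x)}"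

lemma Delta_perm:
  fixes M :: "'k::field^3^3"
  assumes M: "M \<in> Delta q" and q: "2 \<le> q"
  shows "(linf M 1 ^ (q - 1), linf M 2 ^ (q - 1), linf M 3 ^ (q - 1))
           \<in> perm6 (Xv ^ (q - 1)) (Yv ^ (q - 1)) (Zv ^ (q - 1))"
proof -
  obtain s c where c: "\<forall>i. c i \<noteq> 0 \<and> c i ^ (q - 1) = 1"
    and e: "\<forall>r i. M $ r $ i = (if r = s i then c i else 0)" and d: "det M \<noteq> 0"
    using Delta_struct[OF M q] by blast
  have c1: "c 1 ^ (q - 1) = 1" "c 2 ^ (q - 1) = 1" "c 3 ^ (q - 1) = 1" using c by auto
  have L: "linf M r = const3 (if r = s 1 then c 1 else 0) * Xv + const3 (if r = s 2 then c 2 else 0) * Yv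
      + const3 (if r = s 3 then c 3 else 0) * Zv" for r
    by (simp add: linf_def sum_3 var3_def e)
  have d': "det (\<chi> r i. if r = s i then c i else 0) \<noteq> 0"
  proof -
    have "M = (\<chi> r i. if r = s i then c i else 0)" using e by (simp add: vec_eq_iff)
    then show ?thesis using d by simp
  qed
  show ?thesis
    unfolding L
    using d' c1
    by (cases "s 1" rule: cases3; cases "s 2" rule: cases3; cases "s 3" rule: cases3)
       (simp_all add: det_3 perm6_def power_mult_distrib const3_power[symmetric])
qed

definition S3 :: "nat \<Rightarrow> 'k::comm_ring_1 \<Rightarrow> 'k \<Rightarrow> 'k \<Rightarrow> 'k pp3" where
  "S3 n a b c = mon a n 0 0 + mon b 0 n 0 + mon c 0 0 n"

definition S6 :: "nat \<Rightarrow> 'k::comm_ring_1 \<Rightarrow> 'k \<Rightarrow> 'k \<Rightarrow> 'k \<Rightarrow> 'k \<Rightarrow> 'k \<Rightarrow> 'k pp3" where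
  "S6 n a1 a2 a3 b1 b2 b3 = mon a1 (2 * n) 0 0 + mon a2 0 (2 * n) 0 + mon a3 0 0 (2 * n)
     + mon b1 0 n n + mon b2 n 0 n + mon b3 n n 0"

lemma cf_S3: "n \<ge> 1 \<Longrightarrow> cf (S3 n a b c) i j k =
   (if (i,j,k) = (n,0,0) then a else if (i,j,k) = (0,n,0) then b else if (i,j,k) = (0,0,n) then c else 0)"
  by (auto simp: S3_def cf_mon)

lemma cf_S6: "n \<ge> 1 \<Longrightarrow> cf (S6 n a1 a2 a3 b1 b2 b3) i j k =
   (if (i,j,k) = (2*n,0,0) then a1 else if (i,j,k) = (0,2*n,0) then a2 else if (i,j,k) = (0,0,2*n) then a3
    else if (i,j,k) = (0,n,n) then b1 else if (i,j,k) = (n,0,n) then b2 else if (i,j,k) = (n,n,0) then b3 else 0)"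
  by (auto simp: S6_def cf_mon)

lemma fermat_S3: "fermat q = S3 (q - 1) 1 1 1"
  by (simp add: fermat_def S3_def mon_def)

lemma ring6: "T * (X + Y + Z)\<^sup>2 + X * Y + Y * Z + Z * X =
   T * (X * X) + T * (Y * Y) + T * (Z * Z) + (2 * T + 1) * (Y * Z) + (2 * T + 1) * (X * Z) + (2 * T + 1) * (X * Y)"
  for T X Y Z :: "'a::comm_ring_1"
  by (simp add: power2_eq_square algebra_simps)

lemma const3_2t1: "const3 (2 * t + 1) = 2 * const3 t + 1"
  by (simp only: mult_2 const3_add const3_1)

lemma fam_S6: "fam q t = S6 (q - 1) t t t (2 * t + 1) (2 * t + 1) (2 * t + 1)"
proof -
  define n where "n = q - 1"
  have "fam q t = const3 t * (Xv ^ n + Yv ^ n + Zv ^ n)\<^sup>2 + Xv ^ n * Yv ^ n + Yv ^ n * Zv ^ n + Zv ^ n * Xv ^ n"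
    by (simp add: fam_def fermat_def n_def power_mult_distrib)
  also have "\<dots> = S6 n t t t (2 * t + 1) (2 * t + 1) (2 * t + 1)"
    unfolding ring6 S6_def const3_2t1[symmetric]
    by (simp only: mon_def power_0 mult_1_right mult_2 power_add mult.assoc)
  finally show ?thesis by (simp add: n_def)
qed

lemma homog_cf: "homog N F \<longleftrightarrow> F \<noteq> 0 \<and> (\<forall>i j k. cf F i j k \<noteq> 0 \<longrightarrow> i + j + k = N)"
  by (simp add: homog_def cf_def)

lemma homog_fermat:
  assumes "c \<noteq> 0" "q \<ge> 2" shows "homog (q - 1) (const3 c * fermat q :: 'k::field pp3)"
proof -
  have n: "q - 1 \<ge> 1" using assms by simp
  have "cf (const3 c * fermat q) (q - 1) 0 0 \<noteq> 0" using assms n by (simp add: fermat_S3 cf_S3)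
  then have "const3 c * fermat q \<noteq> 0" by (metis cf_zero)
  moreover have "\<forall>i j k. cf (const3 c * fermat q) i j k \<noteq> 0 \<longrightarrow> i + j + k = q - 1"
    using n by (auto simp: fermat_S3 cf_S3 split: if_splits)
  ultimately show ?thesis by (simp add: homog_cf)
qed

lemma homog_fam:
  assumes "c \<noteq> 0" "q \<ge> 2" shows "homog (2 * (q - 1)) (const3 c * fam q t :: 'k::field pp3)"
proof -
  have n: "q - 1 \<ge> 1" using assms by simp
  have "cf (const3 c * fam q t) (2 * (q - 1)) 0 0 \<noteq> 0 \<or> cf (const3 c * fam q t) (q - 1) (q - 1) 0 \<noteq> 0"
    using assms n by (auto simp: fam_S6 cf_S6)
  then have "const3 c * fam q t \<noteq> 0" by (metis cf_zero)
  moreover have "\<forall>i j k. cf (const3 c * fam q t) i j k \<noteq> 0 \<longrightarrow> i + j + k = 2 * (q - 1)"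
    using n by (auto simp: fam_S6 cf_S6 split: if_splits)
  ultimately show ?thesis by (simp add: homog_cf)
qed

lemma lin_subst_const3_mult: "lin_subst M (const3 c * F) = const3 c * lin_subst M F"
  by (simp add: lin_subst_def)

lemma invariant_const3:
  "invariant G F \<Longrightarrow> invariant G (const3 c * F)"
  unfolding invariant_def lin_subst_const3_mult by (metis mult.left_commute)

lemma fermat_inv: "q \<ge> 2 \<Longrightarrow> invariant (Delta q) (fermat q :: 'k::field pp3)"
  unfolding invariant_def
proof
  fix M :: "'k^3^3" assume "M \<in> Delta q" "q \<ge> 2"
  from Delta_perm[OF this]
  have "lin_subst M (fermat q) = fermat q"
    by (auto simp: perm6_def lin_subst_linf fermat_def ac_simps)
  then show "\<exists>c. c \<noteq> 0 \<and> lin_subst M (fermat q) = const3 c * fermat q"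
    by (intro exI[of _ 1]) simp
qed

lemma fam_inv: "q \<ge> 2 \<Longrightarrow> invariant (Delta q) (fam q t :: 'k::field pp3)"
  unfolding invariant_def
proof
  fix M :: "'k^3^3" assume "M \<in> Delta q" "q \<ge> 2"
  from Delta_perm[OF this]
  have "lin_subst M (fam q t) = fam q t"
    by (auto simp: perm6_def lin_subst_linf fam_def fermat_def power_mult_distrib ac_simps)
  then show "\<exists>c. c \<noteq> 0 \<and> lin_subst M (fam q t) = const3 c * fam q t"
    by (intro exI[of _ 1]) simp
qed

definition sw12 :: "'k::field^3^3" where
  "sw12 = (\<chi> r i. if (r = 1 \<and> i = 2) \<or> (r = 2 \<and> i = 1) \<or> (r = 3 \<and> i = 3) then 1 else 0)"
definition sw23 :: "'k::field^3^3" where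
  "sw23 = (\<chi> r i. if (r = 1 \<and> i = 1) \<or> (r = 2 \<and> i = 3) \<or> (r = 3 \<and> i = 2) then 1 else 0)"

lemma sw12_Delta: "q \<ge> 2 \<Longrightarrow> (sw12 :: 'k::field^3^3) \<in> Delta q"
  unfolding Delta_def PGL3_def
  apply (simp add: det_3 sw12_def forall_3)
  apply (intro conjI)
    apply (rule exI[of _ 2], rule exI[of _ 1], simp add: vec_eq_iff forall_3 matrix_vector_mult_def sum_3 axis_def)
   apply (rule exI[of _ 1], rule exI[of _ 1], simp add: vec_eq_iff forall_3 matrix_vector_mult_def sum_3 axis_def)
  apply (rule exI[of _ 3], rule exI[of _ 1], simp add: vec_eq_iff forall_3 matrix_vector_mult_def sum_3 axis_def)
  done

lemma sw23_Delta: "q \<ge> 2 \<Longrightarrow> (sw23 :: 'k::field^3^3) \<in> Delta q"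
  unfolding Delta_def PGL3_def
  apply (simp add: det_3 sw23_def forall_3)
  apply (intro conjI)
    apply (rule exI[of _ 1], rule exI[of _ 1], simp add: vec_eq_iff forall_3 matrix_vector_mult_def sum_3 axis_def)
   apply (rule exI[of _ 3], rule exI[of _ 1], simp add: vec_eq_iff forall_3 matrix_vector_mult_def sum_3 axis_def)
  apply (rule exI[of _ 2], rule exI[of _ 1], simp add: vec_eq_iff forall_3 matrix_vector_mult_def sum_3 axis_def)
  done

lemma lin_subst_sw12: "lin_subst (sw12 :: 'k::field^3^3) F = eval3 F Yv Xv Zv"
  by (simp add: lin_subst_linf linf_def sum_3 var3_def sw12_def)
lemma lin_subst_sw23: "lin_subst (sw23 :: 'k::field^3^3) F = eval3 F Xv Zv Yv"
  by (simp add: lin_subst_linf linf_def sum_3 var3_def sw23_def)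

lemma S3_sw12: "eval3 (S3 n a b c) Yv Xv Zv = S3 n b a c"
  by (simp add: S3_def mon_def ac_simps)
lemma S3_sw23: "eval3 (S3 n a b c) Xv Zv Yv = S3 n a c b"
  by (simp add: S3_def mon_def ac_simps)
lemma S6_sw12: "eval3 (S6 n a1 a2 a3 b1 b2 b3) Yv Xv Zv = S6 n a2 a1 a3 b2 b1 b3"
  by (simp add: S6_def mon_def ac_simps)
lemma S6_sw23: "eval3 (S6 n a1 a2 a3 b1 b2 b3) Xv Zv Yv = S6 n a1 a3 a2 b1 b3 b2"
  by (simp add: S6_def mon_def ac_simps)

lemma S3_eq:
  assumes "n \<ge> 1" "S3 n a b c = const3 e * S3 n a' b' c'"
  shows "a = e * a' \<and> b = e * b' \<and> c = e * c'"
proof -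
  have "\<And>i j k. cf (S3 n a b c) i j k = cf (const3 e * S3 n a' b' c') i j k" using assms(2) by simp
  from this[of n 0 0] this[of 0 n 0] this[of 0 0 n] show ?thesis
    using assms(1) by (simp add: cf_S3)
qed

lemma S6_eq:
  assumes "n \<ge> 1" "S6 n a1 a2 a3 b1 b2 b3 = const3 e * S6 n a1' a2' a3' b1' b2' b3'"
  shows "a1 = e * a1' \<and> a2 = e * a2' \<and> a3 = e * a3' \<and> b1 = e * b1' \<and> b2 = e * b2' \<and> b3 = e * b3'"
proof -
  have "\<And>i j k. cf (S6 n a1 a2 a3 b1 b2 b3) i j k = cf (const3 e * S6 n a1' a2' a3' b1' b2' b3') i j k"
    using assms(2) by simp
  from this[of "2*n" 0 0] this[of 0 "2*n" 0] this[of 0 0 "2*n"] this[of 0 n n] this[of n 0 n] this[of n n 0]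
  show ?thesis using assms(1) by (simp add: cf_S6)
qed

lemma const3_S3: "const3 e * S3 n a b c = S3 n (e * a) (e * b) (e * c)"
  by (simp add: S3_def mon_def const3_mult algebra_simps)
lemma const3_S6: "const3 e * S6 n a1 a2 a3 b1 b2 b3 = S6 n (e * a1) (e * a2) (e * a3) (e * b1) (e * b2) (e * b3)"
  by (simp add: S6_def mon_def const3_mult algebra_simps)

lemma eq_by_support:
  assumes "\<forall>i j k. cf F i j k \<noteq> 0 \<longrightarrow> (i, j, k) \<in> S"
    and "\<forall>i j k. cf G i j k = (if (i, j, k) \<in> S then cf F i j k else 0)"
  shows "F = G"
  unfolding cf_eq_iff using assms by metis

lemma ring_sq3: "(X + Y + Z)\<^sup>2 = X * X + Y * Y + Z * Z + 2 * (Y * Z) + 2 * (X * Z) + 2 * (X * Y)"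
  for X Y Z :: "'a::comm_ring_1"
  by (simp add: power2_eq_square algebra_simps)

lemma const3_2: "const3 2 = 2"
  by (simp only: one_add_one[symmetric] const3_add const3_1)

lemma fix1: "x = e * x \<Longrightarrow> x \<noteq> 0 \<Longrightarrow> e = (1::'a::field)"
  by (metis mult_cancel_right1)

context
  fixes q :: nat
  assumes alg: "\<And>P::'k::field poly. degree P > 0 \<Longrightarrow> \<exists>x. poly P x = 0"
    and q3: "3 \<le> q" and ch: "of_nat q = (0::'k)"
begin

lemma class_n:
  fixes F :: "'k pp3"
  assumes inv: "inv_irr_curve (Delta q) (q - 1) F"
  shows "\<exists>c. c \<noteq> 0 \<and> F = const3 c * fermat q"
proof -
  define n where "n = q - 1"
  have n2: "n \<ge> 2" and n1: "n \<ge> 1" using q3 by (auto simp: n_def)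
  have q2: "q \<ge> 2" using q3 by simp
  have hom: "homog n F" and iv: "invariant (Delta q) F" using inv by (auto simp: inv_irr_curve_def n_def)
  have supp: "cf F i j k \<noteq> 0 \<longrightarrow> (i, j, k) \<in> {(n,0,0),(0,n,0),(0,0,n)}" for i j k
  proof
    assume nz: "cf F i j k \<noteq> 0"
    then have d: "n dvd i" "n dvd j" "n dvd k"
      using support_dvd[OF alg q3 ch inv _ nz] n2 by (auto simp: n_def)
    have sm: "i + j + k = n" using hom nz by (auto simp: homog_cf)
    from d obtain a b c where abc: "i = n * a" "j = n * b" "k = n * c" by (auto elim!: dvdE)
    then have "n * (a + b + c) = n * 1" using sm by (simp add: algebra_simps)
    then have "a + b + c = 1" using n1 by simp
    then have "(a=1\<and>b=0\<and>c=0) \<or> (a=0\<and>b=1\<and>c=0) \<or> (a=0\<and>b=0\<and>c=1)" by arith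
    then show "(i, j, k) \<in> {(n,0,0),(0,n,0),(0,0,n)}" using abc by auto
  qed
  define a where "a = cf F n 0 0"
  define b where "b = cf F 0 n 0"
  define c where "c = cf F 0 0 n"
  have F: "F = S3 n a b c"
    by (rule eq_by_support[where S = "{(n,0,0),(0,n,0),(0,0,n)}"])
       (use supp n1 in \<open>auto simp: cf_S3 a_def b_def c_def\<close>)
  have F0: "F \<noteq> 0" using hom by (simp add: homog_cf)
  have nz: "\<not> (a = 0 \<and> b = 0 \<and> c = 0)" using F0 F by (auto simp: S3_def)
  obtain e where "lin_subst sw12 F = const3 e * F" using iv sw12_Delta[OF q2] unfolding invariant_def by blast
  then have "S3 n b a c = const3 e * S3 n a b c" using F by (simp add: lin_subst_sw12 S3_sw12)
  then have E1: "b = e * a" "a = e * b" "c = e * c" using S3_eq[OF n1] by blast+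
  obtain e' where "lin_subst sw23 F = const3 e' * F" using iv sw23_Delta[OF q2] unfolding invariant_def by blast
  then have "S3 n a c b = const3 e' * S3 n a b c" using F by (simp add: lin_subst_sw23 S3_sw23)
  then have E2: "a = e' * a" "c = e' * b" "b = e' * c" using S3_eq[OF n1] by blast+
  have a0: "a \<noteq> 0"
  proof
    assume a: "a = 0"
    then have b: "b = 0" using E1(1) by simp
    then have "c = 0" using E2(2) by simp
    then show False using nz a b by simp
  qed
  then have e'1: "e' = 1" using E2(1) fix1 by metis
  then have cb: "c = b" using E2(2) by simp
  have b0: "b \<noteq> 0"
  proof
    assume "b = 0" then have "a = 0" using E1(2) by simp
    then show False using a0 by simp
  qed
  then have "e = 1" using E1(3) cb fix1 by metis
  then have ab: "b = a" using E1(1) by simp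
  have "F = const3 a * fermat q" using F ab cb by (simp add: fermat_S3 const3_S3 n_def)
  then show ?thesis using a0 by blast
qed

lemma fermat_sq: "(fermat q)\<^sup>2 = S6 (q - 1) 1 1 1 2 2 2"
proof -
  define n where "n = q - 1"
  have "(fermat q)\<^sup>2 = (Xv ^ n + Yv ^ n + Zv ^ n)\<^sup>2" by (simp add: fermat_def n_def)
  also have "\<dots> = Xv ^ n * Xv ^ n + Yv ^ n * Yv ^ n + Zv ^ n * Zv ^ n + 2 * (Yv ^ n * Zv ^ n)
      + 2 * (Xv ^ n * Zv ^ n) + 2 * (Xv ^ n * Yv ^ n)" by (rule ring_sq3)
  also have "\<dots> = S6 n 1 1 1 2 2 2"
    unfolding S6_def mon_def const3_2 const3_1 by (simp only: power_0 mult_1_right mult_1_left mult_2 power_add mult.assoc distrib_right)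
  finally show ?thesis by (simp add: n_def)
qed

lemma class_2n:
  fixes F :: "'k pp3"
  assumes inv: "inv_irr_curve (Delta q) (2 * (q - 1)) F"
  shows "\<exists>c t. c \<noteq> 0 \<and> F = const3 c * fam q t"
proof -
  define n where "n = q - 1"
  have n2: "n \<ge> 2" and n1: "n \<ge> 1" using q3 by (auto simp: n_def)
  have q2: "q \<ge> 2" using q3 by simp
  have hom: "homog (2 * n) F" and iv: "invariant (Delta q) F" and irr: "irreducible F"
    using inv by (auto simp: inv_irr_curve_def n_def)
  define PS where "PS = {(2*n,0,0),(0,2*n,0),(0,0,2*n),(0,n,n),(n,0,n),(n,n,0)}"
  have supp: "cf F i j k \<noteq> 0 \<longrightarrow> (i, j, k) \<in> PS" for i j k
  proof
    assume nz: "cf F i j k \<noteq> 0"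
    then have d: "n dvd i" "n dvd j" "n dvd k"
      using support_dvd[OF alg q3 ch inv _ nz] n2 by (auto simp: n_def)
    have sm: "i + j + k = 2 * n" using hom nz by (auto simp: homog_cf)
    from d obtain a b c where abc: "i = n * a" "j = n * b" "k = n * c" by (auto elim!: dvdE)
    then have "n * (a + b + c) = n * 2" using sm by (simp add: algebra_simps)
    then have "a + b + c = 2" using n1 by simp
    then have "(a=2\<and>b=0\<and>c=0) \<or> (a=0\<and>b=2\<and>c=0) \<or> (a=0\<and>b=0\<and>c=2) \<or>
      (a=0\<and>b=1\<and>c=1) \<or> (a=1\<and>b=0\<and>c=1) \<or> (a=1\<and>b=1\<and>c=0)" by presburger
    then show "(i, j, k) \<in> PS" using abc by (auto simp: PS_def)
  qed
  define a1 where "a1 = cf F (2*n) 0 0"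
  define a2 where "a2 = cf F 0 (2*n) 0"
  define a3 where "a3 = cf F 0 0 (2*n)"
  define b1 where "b1 = cf F 0 n n"
  define b2 where "b2 = cf F n 0 n"
  define b3 where "b3 = cf F n n 0"
  have F: "F = S6 n a1 a2 a3 b1 b2 b3"
    by (rule eq_by_support[where S = PS])
       (use supp n1 in \<open>auto simp: cf_S6 PS_def a1_def a2_def a3_def b1_def b2_def b3_def\<close>)
  have F0: "F \<noteq> 0" using hom by (simp add: homog_cf)
  have nz: "\<not> (a1 = 0 \<and> a2 = 0 \<and> a3 = 0 \<and> b1 = 0 \<and> b2 = 0 \<and> b3 = 0)" using F0 F by (auto simp: S6_def)
  obtain e where "lin_subst sw12 F = const3 e * F" using iv sw12_Delta[OF q2] unfolding invariant_def by blast
  then have "S6 n a2 a1 a3 b2 b1 b3 = const3 e * S6 n a1 a2 a3 b1 b2 b3" using F by (simp add: lin_subst_sw12 S6_sw12)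
  then have E1: "a2 = e * a1" "a1 = e * a2" "a3 = e * a3" "b2 = e * b1" "b1 = e * b2" "b3 = e * b3"
    using S6_eq[OF n1] by blast+
  obtain e' where "lin_subst sw23 F = const3 e' * F" using iv sw23_Delta[OF q2] unfolding invariant_def by blast
  then have "S6 n a1 a3 a2 b1 b3 b2 = const3 e' * S6 n a1 a2 a3 b1 b2 b3" using F by (simp add: lin_subst_sw23 S6_sw23)
  then have E2: "a1 = e' * a1" "a3 = e' * a2" "a2 = e' * a3" "b1 = e' * b1" "b3 = e' * b2" "b2 = e' * b3"
    using S6_eq[OF n1] by blast+
  have e1: "e = 1"
  proof (rule ccontr)
    assume ne: "e \<noteq> 1"
    have z1: "a3 = 0" using E1(3) ne fix1 by metis
    have z2: "b3 = 0" using E1(6) ne fix1 by metis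
    have z3: "a2 = 0" using E2(3) z1 by simp
    have z4: "b2 = 0" using E2(6) z2 by simp
    have z5: "a1 = 0" using E1(2) z3 by simp
    have z6: "b1 = 0" using E1(5) z4 by simp
    show False using nz z1 z2 z3 z4 z5 z6 by simp
  qed
  have e1': "e' = 1"
  proof (rule ccontr)
    assume ne: "e' \<noteq> 1"
    have z1: "a1 = 0" using E2(1) ne fix1 by metis
    have z2: "b1 = 0" using E2(4) ne fix1 by metis
    have z3: "a2 = 0" using E1(1) z1 by simp
    have z4: "b2 = 0" using E1(4) z2 by simp
    have z5: "a3 = 0" using E2(2) z3 by simp
    have z6: "b3 = 0" using E2(5) z4 by simp
    show False using nz z1 z2 z3 z4 z5 z6 by simp
  qed
  have A2: "a2 = a1" using E1(1) e1 by simp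
  have A3: "a3 = a1" using E2(2) e1' A2 by simp
  have B2: "b2 = b1" using E1(4) e1 by simp
  have B3: "b3 = b1" using E2(5) e1' B2 by simp
  note A = A2 A3 B2 B3
  have F': "F = S6 n a1 a1 a1 b1 b1 b1" using F A by simp
  show ?thesis
  proof (cases "b1 = 2 * a1")
    case True
    have "(const3 a1 * fermat q) * fermat q = const3 a1 * (fermat q)\<^sup>2"
      by (simp add: power2_eq_square mult.assoc)
    also have "\<dots> = const3 a1 * S6 n 1 1 1 2 2 2" by (simp only: fermat_sq n_def)
    also have "\<dots> = S6 n a1 a1 a1 (a1 * 2) (a1 * 2) (a1 * 2)" by (simp only: const3_S6 mult_1_right)
    also have "\<dots> = F" using F' True by (simp add: mult.commute)
    finally have "F = (const3 a1 * fermat q) * fermat q" by simp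
    then have "is_unit (const3 a1 * fermat q) \<or> is_unit (fermat q :: 'k pp3)" by (rule irreducibleD[OF irr])
    moreover have "\<not> is_unit (const3 a1 * fermat q)"
    proof
      assume "is_unit (const3 a1 * fermat q)"
      then obtain x :: 'k where "const3 a1 * fermat q = const3 x" using unit_pp3 by metis
      then have "cf (const3 a1 * fermat q) n 0 0 = cf (mon x 0 0 0) n 0 0" by (simp add: const3_mon)
      then have "a1 = 0" using n1 q3 by (simp add: fermat_S3 cf_S3 cf_mon n_def)
      then show False using nz True A by simp
    qed
    moreover have "\<not> is_unit (fermat q :: 'k pp3)"
    proof
      assume "is_unit (fermat q :: 'k pp3)"
      then obtain x :: 'k where "fermat q = const3 x" using unit_pp3 by metis
      then have "cf (fermat q :: 'k pp3) n 0 0 = cf (mon x 0 0 0) n 0 0" by (simp add: const3_mon)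
      then show False using n1 q3 by (simp add: fermat_S3 cf_S3 cf_mon n_def)
    qed
    ultimately show ?thesis by blast
  next
    case False
    define c where "c = b1 - 2 * a1"
    define t where "t = a1 / c"
    have c0: "c \<noteq> 0" using False by (simp add: c_def)
    have ct: "c * t = a1" using c0 by (simp add: t_def)
    have "c * (2 * t + 1) = 2 * (c * t) + c" by (simp add: algebra_simps)
    then have ct2: "c * (2 * t + 1) = b1" unfolding ct by (simp add: c_def)
    have "const3 c * fam q t = F" using F' ct ct2 by (simp add: fam_S6 const3_S6 n_def)
    then show ?thesis using c0 by metis
  qed
qed

end

theorem mainTheorem12:
  fixes p q m :: nat
  assumes "prime p" and "m \<ge> 1" and "q = p ^ m" and "q \<ge> 3"
    and char: "of_nat p = (0::'k::field)"
    and alg_closed: "\<And>P::'k poly. degree P > 0 \<Longrightarrow> \<exists>x. poly P x = 0"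
    and algebraic: "\<And>x::'k. \<exists>P::'k poly. P \<noteq> 0 \<and> (\<forall>i. coeff P i \<in> range of_nat) \<and> poly P x = 0"
  shows "dG (Delta q :: ('k^3^3) set) = q - 1
    \<and> epsG (Delta q :: ('k^3^3) set) = q - 1
    \<and> (\<forall>F::'k pp3. inv_irr_curve (Delta q) (q - 1) F \<longleftrightarrow> (\<exists>c. c \<noteq> 0 \<and> F = const3 c * fermat q))
    \<and> (\<forall>F::'k pp3. inv_irr_curve (Delta q) (2 * (q - 1)) F \<longleftrightarrow>
          irreducible F \<and> (\<exists>c t. c \<noteq> 0 \<and> F = const3 c * fam q t))"
proof -
  define n where "n = q - 1"
  have q3: "3 \<le> q" and q2: "2 \<le> q" using assms(4) by auto
  have n2: "n \<ge> 2" and n1: "n \<ge> 1" using q3 by (auto simp: n_def)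
  have ch: "of_nat q = (0::'k)"
  proof -
    have "(of_nat q :: 'k) = (of_nat p) ^ m" by (simp add: assms(3) of_nat_power)
    then show ?thesis using char assms(2) by (simp add: power_0_left)
  qed
  have nz: "of_nat n \<noteq> (0::'k)" using ofnat_qm1[OF ch] q3 by (simp add: n_def)
  obtain z :: 'k where zn: "z ^ n = -1"
  proof -
    define P :: "'k poly" where "P = [:0,1:] ^ n + [:1:]"
    have "degree P = n" unfolding P_def using n1
      by (subst degree_add_eq_left) (auto simp: degree_power_eq)
    then obtain z where "poly P z = 0" using alg_closed n1 by fastforce
    then have "z ^ n = -1" by (simp add: P_def eq_neg_iff_add_eq_0)
    then show ?thesis by (rule that)
  qed
  have irrF: "irreducible (fermat q :: 'k pp3)"
    using fermat_R_irr[OF n1 nz zn] by (simp add: fermat_R n_def)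
  have irrG: "irreducible (fam q 0 :: 'k pp3)"
    using fam0_R_irr[OF n1 nz zn] by (simp add: fam0_R n_def)
  have famI: "invariant (Delta q) (fam q t :: 'k pp3)" for t by (rule fam_inv[OF q2])
  have ferI: "invariant (Delta q) (fermat q :: 'k pp3)" by (rule fermat_inv[OF q2])
  have invF: "inv_irr_curve (Delta q) n (fermat q :: 'k pp3)"
    using homog_fermat[of 1 q] q2 irrF ferI
    by (simp add: inv_irr_curve_def n_def)
  have invG: "inv_irr_curve (Delta q) (2 * n) (fam q 0 :: 'k pp3)"
    using homog_fam[of 1 q 0] q2 irrG famI
    by (simp add: inv_irr_curve_def n_def)
  have ddvd: "n dvd N" if "inv_irr_curve (Delta q) N (F :: 'k pp3)" "2 \<le> N" for N F
    using degree_dvd[OF alg_closed q3 ch that] by (simp add: n_def)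
  have dG: "dG (Delta q :: ('k^3^3) set) = n"
    unfolding dG_def
  proof (rule Least_equality)
    show "2 \<le> n \<and> (\<exists>F::'k pp3. inv_irr_curve (Delta q) n F)" using n2 invF by blast
    fix y assume "2 \<le> y \<and> (\<exists>F::'k pp3. inv_irr_curve (Delta q) y F)"
    then obtain F :: "'k pp3" where "2 \<le> y" "inv_irr_curve (Delta q) y F" by blast
    then have "n dvd y" using ddvd by blast
    then show "n \<le> y" using \<open>2 \<le> y\<close> by (simp add: dvd_imp_le)
  qed
  have d'G: "d'G (Delta q :: ('k^3^3) set) = 2 * n"
    unfolding d'G_def dG
  proof (rule Least_equality)
    show "n < 2 * n \<and> (\<exists>F::'k pp3. inv_irr_curve (Delta q) (2 * n) F)" using n2 invG by auto
    fix y assume "n < y \<and> (\<exists>F::'k pp3. inv_irr_curve (Delta q) y F)"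
    then obtain F :: "'k pp3" where y: "n < y" "inv_irr_curve (Delta q) y F" by blast
    then have "n dvd y" using ddvd n2 by auto
    then obtain k where k: "y = n * k" by (auto elim!: dvdE)
    have "k \<ge> 2"
    proof (rule ccontr)
      assume "\<not> k \<ge> 2"
      then have "k \<le> 1" by simp
      then have "n * k \<le> n * 1" by (rule mult_le_mono2)
      then show False using y(1) k by simp
    qed
    then show "2 * n \<le> y" using k by simp
  qed
  have P3: "\<forall>F::'k pp3. inv_irr_curve (Delta q) (q - 1) F \<longleftrightarrow> (\<exists>c. c \<noteq> 0 \<and> F = const3 c * fermat q)"
  proof (intro allI iffI)
    fix F :: "'k pp3"
    assume "inv_irr_curve (Delta q) (q - 1) F"
    then show "\<exists>c. c \<noteq> 0 \<and> F = const3 c * fermat q" using class_n[OF alg_closed q3 ch] by blast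
  next
    fix F :: "'k pp3"
    assume "\<exists>c. c \<noteq> 0 \<and> F = const3 c * fermat q"
    then obtain c where c: "c \<noteq> 0" "F = const3 c * fermat q" by blast
    have u: "is_unit (const3 c :: 'k pp3)"
      using c(1) by (intro dvdI[of _ _ "const3 (inverse c)"]) (simp add: const3_mult[symmetric])
    show "inv_irr_curve (Delta q) (q - 1) F"
      unfolding inv_irr_curve_def c(2)
      using homog_fermat[OF c(1) q2] irreducible_mult_unit_left[OF u] irrF
        invariant_const3[OF ferI] by simp
  qed
  have P4: "\<forall>F::'k pp3. inv_irr_curve (Delta q) (2 * (q - 1)) F \<longleftrightarrow>
          irreducible F \<and> (\<exists>c t. c \<noteq> 0 \<and> F = const3 c * fam q t)"
  proof (intro allI iffI)
    fix F :: "'k pp3"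
    assume h: "inv_irr_curve (Delta q) (2 * (q - 1)) F"
    then show "irreducible F \<and> (\<exists>c t. c \<noteq> 0 \<and> F = const3 c * fam q t)"
      using class_2n[OF alg_closed q3 ch h] by (simp add: inv_irr_curve_def)
  next
    fix F :: "'k pp3"
    assume "irreducible F \<and> (\<exists>c t. c \<noteq> 0 \<and> F = const3 c * fam q t)"
    then obtain c t where c: "c \<noteq> 0" "F = const3 c * fam q t" and irr: "irreducible F" by blast
    show "inv_irr_curve (Delta q) (2 * (q - 1)) F"
      unfolding inv_irr_curve_def
      using homog_fam[OF c(1) q2, of t] irr invariant_const3[OF famI] c(2) by simp
  qed
  show ?thesis
    using dG d'G P3 P4 by (simp add: epsG_def n_def)
qed

end
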